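(* Let $i,j,k$ be integers with $j>i>0$ and $0\le k<i$. Then: (1) if the virtual link diagram $(i,j-i,k)$ has exactly one component, so does $(i,j,k)$; (2) $(i,j,k)$ can be modified into $(i,j-i,k)$ by $i(i-1)/2$ crossing changes (together with generalized Reidemeister moves / isotopy).
   Context: Braid conventions: braids on $i$ strands are drawn horizontally, oriented left to right, with positions $1,\dots,i$ numbered from top to bottom, and words are read left to right. The generator $\sigma_m$ is a classical (positive) crossing at which the strand in position $m$ moves to position $m+1$, passing over the strand moving from position $m+1$ to position $m$. A virtual crossing is drawn with a small circle and has no over/under information. For $j\ge1$, $VB^1_{i,j}$ is the virtual braid obtained from $(\sigma_1\cdots\sigma_{i-1})^j$ by replacing the crossings of the first (left-most) block $\sigma_1\cdots\sigma_{i-1}$ by virtual crossings. $B_k=\sigma_k\sigma_{k-1}\cdots\sigma_1$, with $B_0$ trivial. $(i,j,k)$ is the closure of $VB^1_{i,j}B_k$. A crossing change exchanges over- and understrand at a classical crossing. Generalized Reidemeister moves are the classical moves R1–R3, the virtual moves VR1–VR3 and the mixed move MR. *)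

theory Defs
  imports Main
begin

text \<open>A letter is either a classical crossing
  Sig m True = sigma_m (positive), Sig m False = sigma_m inverse,
  or a virtual crossing Vir m between positions m and m+1.
  A (closed) virtual braid diagram is a pair (n, w): the closure of the word w on n strands.\<close>

datatype vletter = Sig nat bool | Vir nat

fun letter_idx :: "vletter \<Rightarrow> nat" where
  "letter_idx (Sig m e) = m"
| "letter_idx (Vir m) = m"

type_synonym vbraid = "nat \<times> vletter list"

definition wf_word :: "nat \<Rightarrow> vletter list \<Rightarrow> bool" where
  "wf_word n w \<longleftrightarrow> (\<forall>x\<in>set w. 1 \<le> letter_idx x \<and> letter_idx x < n)"

definition wf_braid :: "vbraid \<Rightarrow> bool" where
  "wf_braid D \<longleftrightarrow> fst D \<ge> 1 \<and> wf_word (fst D) (snd D)"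

definition swap_at :: "nat \<Rightarrow> nat \<Rightarrow> nat" where
  "swap_at m p = (if p = m then Suc m else if p = Suc m then m else p)"

definition word_perm :: "vletter list \<Rightarrow> nat \<Rightarrow> nat" where
  "word_perm w p = foldl (\<lambda>q l. swap_at (letter_idx l) q) p w"

text \<open>Number of components of the closure: number of orbits of the induced permutation.\<close>

definition num_components :: "vbraid \<Rightarrow> nat" where
  "num_components D =
     card ((\<lambda>p. {(word_perm (snd D) ^^ t) p | t. True}) ` {1..fst D})"

text \<open>Local relations of virtual braids (each realised by generalized Reidemeister
  moves or planar isotopy of the closure).\<close>

inductive local_rel :: "vletter list \<Rightarrow> vletter list \<Rightarrow> bool" where
  R2:  "local_rel [Sig m e, Sig m (\<not> e)] []"
| VR2: "local_rel [Vir m, Vir m] []"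
| R3:  "local_rel [Sig m e, Sig (Suc m) e, Sig m e] [Sig (Suc m) e, Sig m e, Sig (Suc m) e]"
| VR3: "local_rel [Vir m, Vir (Suc m), Vir m] [Vir (Suc m), Vir m, Vir (Suc m)]"
| MR:  "local_rel [Vir m, Sig (Suc m) e, Vir m] [Vir (Suc m), Sig m e, Vir (Suc m)]"
| far: "Suc (letter_idx x) < letter_idx y \<or> Suc (letter_idx y) < letter_idx x
        \<Longrightarrow> local_rel [x, y] [y, x]"

text \<open>One elementary move between closed virtual braid diagrams: virtual braid
  relations, conjugation, classical/virtual stabilization and Kamada's exchange move.\<close>

inductive vmove :: "vbraid \<Rightarrow> vbraid \<Rightarrow> bool" where
  local: "local_rel l r \<Longrightarrow> wf_braid (n, u @ l @ v) \<Longrightarrow> wf_braid (n, u @ r @ v)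
          \<Longrightarrow> vmove (n, u @ l @ v) (n, u @ r @ v)"
| conj: "wf_braid (n, a @ b) \<Longrightarrow> vmove (n, a @ b) (n, b @ a)"
| stab: "wf_braid (n, w) \<Longrightarrow> vmove (n, w) (Suc n, w @ [Sig n e])"
| vstab: "wf_braid (n, w) \<Longrightarrow> vmove (n, w) (Suc n, w @ [Vir n])"
| exch: "wf_braid (n, b1) \<Longrightarrow> wf_braid (n, b2) \<Longrightarrow>
         vmove (Suc n, b1 @ [Sig n False] @ b2 @ [Sig n True])
               (Suc n, b1 @ [Vir n] @ b2 @ [Vir n])"

definition gr_equiv :: "vbraid \<Rightarrow> vbraid \<Rightarrow> bool" where
  "gr_equiv = (\<lambda>D E. vmove D E \<or> vmove E D)\<^sup>*\<^sup>*"

inductive crossing_change :: "vbraid \<Rightarrow> vbraid \<Rightarrow> bool" where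
  "wf_braid (n, u @ [Sig m e] @ v) \<Longrightarrow>
   crossing_change (n, u @ [Sig m e] @ v) (n, u @ [Sig m (\<not> e)] @ v)"

inductive modify_cc :: "nat \<Rightarrow> vbraid \<Rightarrow> vbraid \<Rightarrow> bool" where
  refl: "modify_cc 0 D D"
| move: "gr_equiv D D' \<Longrightarrow> modify_cc c D' E \<Longrightarrow> modify_cc c D E"
| cc:   "crossing_change D D' \<Longrightarrow> modify_cc c D' E \<Longrightarrow> modify_cc (Suc c) D E"

definition sigma_block :: "nat \<Rightarrow> vletter list" where
  "sigma_block i = map (\<lambda>m. Sig m True) [1..<i]"

definition virt_block :: "nat \<Rightarrow> vletter list" where
  "virt_block i = map Vir [1..<i]"

definition VB1 :: "nat \<Rightarrow> nat \<Rightarrow> vletter list" where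
  "VB1 i j = virt_block i @ concat (replicate (j - 1) (sigma_block i))"

definition Bk :: "nat \<Rightarrow> vletter list" where
  "Bk k = map (\<lambda>m. Sig m True) (rev [1..<Suc k])"

definition ijk :: "nat \<Rightarrow> nat \<Rightarrow> nat \<Rightarrow> vbraid" where
  "ijk i j k = (i, VB1 i j @ Bk k)"

end

theory Submission
  imports Defs
begin

definition P :: "nat list \<Rightarrow> vletter list" where
  "P ms = map (\<lambda>m. Sig m True) ms"
definition Q :: "nat list \<Rightarrow> vletter list" where
  "Q ms = map (\<lambda>m. Sig m False) ms"

lemma P_append[simp]: "P (a @ b) = P a @ P b" by (simp add: P_def)
lemma Q_append[simp]: "Q (a @ b) = Q a @ Q b" by (simp add: Q_def)
lemma P_Cons: "P (a # b) = Sig a True # P b" by (simp add: P_def)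
lemma P_Nil[simp]: "P [] = []" by (simp add: P_def)
lemma Q_Nil[simp]: "Q [] = []" by (simp add: Q_def)

lemma wf_append[simp]: "wf_word n (a @ b) \<longleftrightarrow> wf_word n a \<and> wf_word n b"
  by (auto simp: wf_word_def)
lemma wf_Cons[simp]: "wf_word n (x # b) \<longleftrightarrow> 1 \<le> letter_idx x \<and> letter_idx x < n \<and> wf_word n b"
  by (auto simp: wf_word_def)
lemma wf_Nil[simp]: "wf_word n []"
  by (auto simp: wf_word_def)
lemma wf_P: "wf_word n (P ms) \<longleftrightarrow> (\<forall>m\<in>set ms. 1 \<le> m \<and> m < n)"
  by (auto simp: wf_word_def P_def)
lemma wf_Q: "wf_word n (Q ms) \<longleftrightarrow> (\<forall>m\<in>set ms. 1 \<le> m \<and> m < n)"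
  by (auto simp: wf_word_def Q_def)

definition bstep :: "nat \<Rightarrow> vletter list \<Rightarrow> vletter list \<Rightarrow> bool" where
  "bstep n w w' \<longleftrightarrow> (\<exists>u l r v. (local_rel l r \<or> local_rel r l) \<and> w = u @ l @ v \<and> w' = u @ r @ v)
      \<and> wf_word n w \<and> wf_word n w'"

definition beq :: "nat \<Rightarrow> vletter list \<Rightarrow> vletter list \<Rightarrow> bool" where
  "beq n = (bstep n)\<^sup>*\<^sup>*"

lemma beq_refl: "beq n w w" by (simp add: beq_def)

lemma beq_trans: "beq n a b \<Longrightarrow> beq n b c \<Longrightarrow> beq n a c"
  unfolding beq_def by (rule rtranclp_trans)

lemma bstep_sym: "bstep n a b \<Longrightarrow> bstep n b a"
  unfolding bstep_def by blast

lemma beq_sym: "beq n a b \<Longrightarrow> beq n b a"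
  unfolding beq_def
proof (induction rule: rtranclp_induct)
  case base then show ?case by simp
next
  case (step y z)
  then show ?case using bstep_sym
    by (metis converse_rtranclp_into_rtranclp)
qed

lemma beq_local:
  assumes "local_rel l r" "wf_word n (u @ l @ v)" "wf_word n (u @ r @ v)"
  shows "beq n (u @ l @ v) (u @ r @ v)"
proof -
  have "bstep n (u @ l @ v) (u @ r @ v)" unfolding bstep_def using assms by blast
  then show ?thesis unfolding beq_def by simp
qed

lemma beq_local':
  assumes "local_rel r l" "wf_word n (u @ l @ v)" "wf_word n (u @ r @ v)"
  shows "beq n (u @ l @ v) (u @ r @ v)"
proof -
  have "bstep n (u @ l @ v) (u @ r @ v)" unfolding bstep_def using assms by blast
  then show ?thesis unfolding beq_def by simp
qed

lemma bstep_cong: "bstep n w w' \<Longrightarrow> wf_word n a \<Longrightarrow> wf_word n b \<Longrightarrow> bstep n (a @ w @ b) (a @ w' @ b)"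
  unfolding bstep_def
proof -
  assume h: "(\<exists>u l r v. (local_rel l r \<or> local_rel r l) \<and> w = u @ l @ v \<and> w' = u @ r @ v)
      \<and> wf_word n w \<and> wf_word n w'" and a: "wf_word n a" "wf_word n b"
  then obtain u l r v where "local_rel l r \<or> local_rel r l" "w = u @ l @ v" "w' = u @ r @ v" by blast
  then have "(local_rel l r \<or> local_rel r l) \<and> a @ w @ b = (a @ u) @ l @ (v @ b) \<and> a @ w' @ b = (a @ u) @ r @ (v @ b)"
    by simp
  then have "\<exists>u l r v. (local_rel l r \<or> local_rel r l) \<and> a @ w @ b = u @ l @ v \<and> a @ w' @ b = u @ r @ v"
    by blast
  then show "(\<exists>u l r v. (local_rel l r \<or> local_rel r l) \<and> a @ w @ b = u @ l @ v \<and> a @ w' @ b = u @ r @ v)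
      \<and> wf_word n (a @ w @ b) \<and> wf_word n (a @ w' @ b)" using h a by simp
qed

lemma beq_cong: "beq n w w' \<Longrightarrow> wf_word n a \<Longrightarrow> wf_word n b \<Longrightarrow> beq n (a @ w @ b) (a @ w' @ b)"
  unfolding beq_def
proof (induction rule: rtranclp_induct)
  case base then show ?case by simp
next
  case (step y z)
  then show ?case using bstep_cong by (meson rtranclp.rtrancl_into_rtrancl)
qed

lemma beq_cong': "beq n w w' \<Longrightarrow> wf_word n a \<Longrightarrow> wf_word n b \<Longrightarrow> a @ w @ b = X \<Longrightarrow> a @ w' @ b = Y \<Longrightarrow> beq n X Y"
  using beq_cong by blast

lemma gr_equiv_trans: "gr_equiv a b \<Longrightarrow> gr_equiv b c \<Longrightarrow> gr_equiv a c"
  unfolding gr_equiv_def by (rule rtranclp_trans)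

lemma bstep_gr: "1 \<le> n \<Longrightarrow> bstep n w w' \<Longrightarrow> vmove (n, w) (n, w') \<or> vmove (n, w') (n, w)"
  unfolding bstep_def
proof -
  assume n: "1 \<le> n" and h: "(\<exists>u l r v. (local_rel l r \<or> local_rel r l) \<and> w = u @ l @ v \<and> w' = u @ r @ v)
      \<and> wf_word n w \<and> wf_word n w'"
  then obtain u l r v where lr: "local_rel l r \<or> local_rel r l" and e: "w = u @ l @ v" "w' = u @ r @ v" by blast
  have wf: "wf_braid (n, w)" "wf_braid (n, w')" using h n by (auto simp: wf_braid_def)
  show ?thesis using lr
  proof
    assume "local_rel l r"
    then show ?thesis using vmove.local[of l r n u v] wf e by simp
  next
    assume "local_rel r l"
    then show ?thesis using vmove.local[of r l n u v] wf e by simp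
  qed
qed

lemma beq_gr: assumes n: "1 \<le> n" and b: "beq n w w'" shows "gr_equiv (n, w) (n, w')"
  using b unfolding beq_def
proof (induction rule: rtranclp_induct)
  case base then show ?case by (simp add: gr_equiv_def)
next
  case (step y z)
  then have "gr_equiv (n, y) (n, z)" using bstep_gr n unfolding gr_equiv_def by blast
  then show ?case using step gr_equiv_trans by blast
qed

lemma word_perm_append: "word_perm (a @ b) p = word_perm b (word_perm a p)"
  by (simp add: word_perm_def)

lemma local_rel_perm: "local_rel l r \<Longrightarrow> word_perm l = word_perm r"
  by (induction rule: local_rel.induct) (auto simp: word_perm_def swap_at_def fun_eq_iff)

lemma bstep_perm: "bstep n w w' \<Longrightarrow> word_perm w = word_perm w'"
  unfolding bstep_def using local_rel_perm by (auto simp: fun_eq_iff word_perm_append)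

lemma beq_perm: "beq n w w' \<Longrightarrow> word_perm w = word_perm w'"
  unfolding beq_def
  by (induction rule: rtranclp_induct) (auto dest: bstep_perm)

lemma perm_PQ: "word_perm (P ms) = word_perm (Q ms)"
  by (simp add: word_perm_def P_def Q_def foldl_map fun_eq_iff)

lemma FC:
  assumes "\<forall>y\<in>set ys. Suc x < y \<or> Suc y < x" "wf_word n (P (x # ys))"
  shows "beq n (P [x] @ P ys) (P ys @ P [x])"
  using assms
proof (induction ys)
  case Nil then show ?case by (simp add: beq_refl)
next
  case (Cons y ys)
  have w: "wf_word n (P [y])" "wf_word n (P [x])" "wf_word n (P ys)" using Cons.prems by (auto simp: wf_P)
  have 1: "beq n ([] @ [Sig x True, Sig y True] @ P ys) ([] @ [Sig y True, Sig x True] @ P ys)"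
    apply (rule beq_local)
    using Cons.prems by (auto intro!: local_rel.far simp: wf_P P_def)
  have 2: "beq n (P [y] @ (P [x] @ P ys) @ []) (P [y] @ (P ys @ P [x]) @ [])"
    apply (rule beq_cong)
    using Cons by (auto simp: wf_P)
  have h1c: "beq n (P [x] @ P (y#ys)) (P [y] @ P [x] @ P ys)" using 1 by (simp add: P_def)
  have h2c: "beq n (P [y] @ P [x] @ P ys) (P (y#ys) @ P [x])" using 2 by (simp add: P_def)
  show ?case using beq_trans[OF h1c h2c] .
qed

lemma upt_split3: "1 \<le> m \<Longrightarrow> m + 2 \<le> N \<Longrightarrow> [1..<N] = [1..<m] @ [m, Suc m] @ [Suc (Suc m)..<N]"
proof -
  assume a: "1 \<le> m" "m + 2 \<le> N"
  have "[1..<N] = [1..<m] @ [m..<N]" using a upt_add_eq_append[of 1 m "N - m"] by simp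
  also have "[m..<N] = [m, Suc m] @ [Suc (Suc m)..<N]" using a by (simp add: upt_conv_Cons)
  finally show ?thesis .
qed

lemma L1:
  assumes "1 \<le> m" "m + 2 \<le> N" "N \<le> n"
  shows "beq n (P [Suc m] @ P [1..<N]) (P [1..<N] @ P [m])"
proof -
  let ?A = "[1..<m]" and ?R = "[Suc (Suc m)..<N]"
  have e: "[1..<N] = ?A @ [m, Suc m] @ ?R" using upt_split3 assms by blast
  have e0: "[Suc 0..<N] = [Suc 0..<m] @ [m, Suc m] @ ?R" using e by simp
  have wA: "wf_word n (P ?A)" "wf_word n (P ?R)" "wf_word n (P [m, Suc m])"
    "wf_word n (P [Suc m])" "wf_word n (P [m])"
    using assms by (auto simp: wf_P)
  have 1: "beq n (P [Suc m] @ P ?A) (P ?A @ P [Suc m])"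
    apply (rule FC) using assms by (auto simp: wf_P)
  have h1b: "beq n (P [Suc m] @ P [1..<N]) (P ?A @ P [Suc m, m, Suc m] @ P ?R)"
    apply (rule beq_cong'[OF 1, of "[]" "P [m, Suc m] @ P ?R"])
    using wA by (simp_all add: e0 P_Cons)
  have 2: "beq n (P ?A @ [Sig (Suc m) True, Sig m True, Sig (Suc m) True] @ P ?R)
                 (P ?A @ [Sig m True, Sig (Suc m) True, Sig m True] @ P ?R)"
    apply (rule beq_local'[OF local_rel.R3])
    using wA by (auto simp: P_def)
  have 3: "beq n (P [m] @ P ?R) (P ?R @ P [m])"
    apply (rule FC) using assms by (auto simp: wf_P)
  have h3b: "beq n (P ?A @ P [m, Suc m, m] @ P ?R) (P [1..<N] @ P [m])"
    apply (rule beq_cong'[OF 3, of "P ?A @ P [m, Suc m]" "[]"])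
    using wA by (simp_all add: e0 P_Cons)
  show ?thesis using beq_trans[OF h1b beq_trans[OF _ h3b]] 2 by (simp add: P_def)
qed

lemma L2:
  assumes "\<forall>m\<in>set ms. 1 \<le> m \<and> m + 2 \<le> N" "N \<le> n"
  shows "beq n (P (map Suc ms) @ P [1..<N]) (P [1..<N] @ P ms)"
  using assms
proof (induction ms)
  case Nil then show ?case by (simp add: beq_refl)
next
  case (Cons m ms)
  have wS: "wf_word n (P [1..<N])" using Cons.prems by (auto simp: wf_P)
  have wm: "wf_word n (P [Suc m])" "wf_word n (P ms)" using Cons.prems by (auto simp: wf_P)
  have 1: "beq n (P (map Suc (m # ms)) @ P [1..<N]) (P [Suc m] @ P [1..<N] @ P ms)"
    apply (rule beq_cong'[OF Cons.IH, of "P [Suc m]" "[]"])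
    using Cons.prems wm by (auto simp: P_def)
  have 2: "beq n (P [Suc m] @ P [1..<N] @ P ms) (P [1..<N] @ P (m # ms))"
    apply (rule beq_cong'[OF L1, of m N n "[]" "P ms"])
    using Cons.prems wm by (auto simp: P_def)
  show ?case using beq_trans[OF 1 2] .
qed

definition pw :: "vletter list \<Rightarrow> nat \<Rightarrow> vletter list" where
  "pw w k = concat (replicate k w)"

lemma pw_0[simp]: "pw w 0 = []" by (simp add: pw_def)
lemma pw_Suc: "pw w (Suc k) = w @ pw w k" by (simp add: pw_def)
lemma pw_Suc2: "pw w (Suc k) = pw w k @ w"
  by (simp add: pw_def replicate_append_same[symmetric] del: replicate_append_same)
lemma pw_add: "pw w (a + b) = pw w a @ pw w b" by (simp add: pw_def replicate_add)
lemma wf_pw: "wf_word n w \<Longrightarrow> wf_word n (pw w k)" by (induction k) (auto simp: pw_Suc)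

lemma L3:
  assumes "k \<le> n'" "n' + 1 \<le> n"
  shows "beq n (pw (P [1..<n'+1]) k) (pw (P [1..<n']) k @ P (rev [n'+1-k..<n'+1]))"
  using assms
proof (induction k)
  case 0 then show ?case by (simp add: beq_refl)
next
  case (Suc k)
  have wS: "wf_word n (P [1..<n'+1])" "wf_word n (P [1..<n'])" using Suc.prems by (auto simp: wf_P)
  have 1: "beq n (pw (P [1..<n'+1]) (Suc k))
     (pw (P [1..<n']) k @ P (rev [n'+1-k..<n'+1]) @ P [1..<n'+1])"
    apply (rule beq_cong'[OF Suc.IH, of "[]" "P [1..<n'+1]"])
    using Suc.prems wS by (auto simp: pw_Suc2)
  have e1: "rev [n'+1-k..<n'+1] = map Suc (rev [n'-k..<n'])"
  proof -
    have A: "map Suc [n'-k..<n'] = [Suc (n'-k)..<Suc n']" by (rule map_Suc_upt)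
    have B: "Suc (n'-k) = n'+1-k" using Suc.prems by arith
    show ?thesis by (metis A B Suc_eq_plus1 rev_map)
  qed
  have 2: "beq n (P (rev [n'+1-k..<n'+1]) @ P [1..<n'+1]) (P [1..<n'+1] @ P (rev [n'-k..<n']))"
    unfolding e1 apply (rule L2) using Suc.prems by auto
  have h2b: "beq n (pw (P [1..<n']) k @ P (rev [n'+1-k..<n'+1]) @ P [1..<n'+1])
     (pw (P [1..<n']) k @ P [1..<n'+1] @ P (rev [n'-k..<n']))"
    apply (rule beq_cong'[OF 2, of "pw (P [1..<n']) k" "[]"])
    using wS wf_pw by auto
  have e2: "pw (P [1..<n']) k @ P [1..<n'+1] @ P (rev [n'-k..<n'])
      = pw (P [1..<n']) (Suc k) @ P (rev [n'+1-Suc k..<n'+1])"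
  proof -
    have a: "[1..<n'+1] = [1..<n'] @ [n']" using Suc.prems by simp
    have b: "[n'+1-Suc k..<n'+1] = [n'-k..<n'] @ [n']" using Suc.prems by simp
    show ?thesis unfolding a b by (simp add: pw_Suc2 P_Cons)
  qed
  show ?case using beq_trans[OF 1 h2b] e2 by simp
qed

fun Dl :: "nat \<Rightarrow> nat list" where
  "Dl 0 = []"
| "Dl (Suc n) = [1..<Suc n] @ Dl n"

lemma Dl_set: "m \<in> set (Dl N) \<Longrightarrow> 1 \<le> m \<and> m < N"
  by (induction N) auto

lemma Dl_len: "2 * length (Dl N) = N * (N - 1)"
proof (induction N)
  case 0 then show ?case by simp
next
  case (Suc N) then show ?case by (cases N) (auto simp: algebra_simps)
qed

lemma L4:
  assumes "N \<le> n"
  shows "beq n (pw (P [1..<N]) N) (P (Dl N @ rev (Dl N)))"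
  using assms
proof (induction N)
  case 0 then show ?case by (simp add: beq_refl)
next
  case (Suc n')
  have wS: "wf_word n (P [1..<n'+1])" using Suc.prems by (auto simp: wf_P)
  have wr: "wf_word n (P (rev [1..<n'+1]))" using Suc.prems by (auto simp: wf_P)
  have 1: "beq n (pw (P [1..<Suc n']) (Suc n'))
     (P [1..<n'+1] @ pw (P [1..<n']) n' @ P (rev [1..<n'+1]))"
    apply (rule beq_cong'[OF L3[of n' n' n], of "P [1..<n'+1]" "[]"])
    using Suc.prems wS by (auto simp: pw_Suc)
  have 2: "beq n (P [1..<n'+1] @ pw (P [1..<n']) n' @ P (rev [1..<n'+1]))
     (P [1..<n'+1] @ P (Dl n' @ rev (Dl n')) @ P (rev [1..<n'+1]))"
    apply (rule beq_cong[OF Suc.IH]) using Suc.prems wS wr by auto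
  show ?case using beq_trans[OF 1 2] by simp
qed

lemma L5:
  assumes "\<forall>m\<in>set ms. 1 \<le> m \<and> m < n"
  shows "beq n (P ms @ Q (rev ms)) []"
  using assms
proof (induction ms rule: rev_induct)
  case Nil then show ?case by (simp add: beq_refl)
next
  case (snoc a ms)
  have 1: "beq n (P ms @ [Sig a True, Sig a (\<not> True)] @ Q (rev ms)) (P ms @ [] @ Q (rev ms))"
    apply (rule beq_local[OF local_rel.R2]) using snoc.prems by (auto simp: wf_P wf_Q)
  have "beq n (P (ms @ [a]) @ Q (rev (ms @ [a]))) (P ms @ Q (rev ms))"
    using 1 by (simp add: P_def Q_def)
  then show ?case using snoc beq_trans by auto
qed

lemma CC:
  assumes "wf_word n (u @ P ms @ v)" "1 \<le> n"
  shows "modify_cc (length ms) (n, u @ P ms @ v) (n, u @ Q ms @ v)"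
  using assms
proof (induction ms arbitrary: u)
  case Nil then show ?case by (simp add: modify_cc.refl)
next
  case (Cons m ms)
  have w1: "wf_braid (n, u @ [Sig m True] @ (P ms @ v))"
    using Cons.prems by (simp add: wf_braid_def P_Cons)
  have c: "crossing_change (n, u @ [Sig m True] @ (P ms @ v)) (n, u @ [Sig m (\<not> True)] @ (P ms @ v))"
    by (rule crossing_change.intros[OF w1])
  have w2: "wf_word n ((u @ [Sig m False]) @ P ms @ v)" using Cons.prems by (simp add: P_Cons)
  have ih: "modify_cc (length ms) (n, (u @ [Sig m False]) @ P ms @ v) (n, (u @ [Sig m False]) @ Q ms @ v)"
    using Cons.IH[OF w2] Cons.prems by simp
  have "modify_cc (Suc (length ms)) (n, u @ [Sig m True] @ (P ms @ v)) (n, (u @ [Sig m False]) @ Q ms @ v)"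
    using modify_cc.cc[OF c] ih by simp
  then show ?case by (simp add: P_Cons Q_def)
qed

lemma modify_gr: "modify_cc c D E \<Longrightarrow> gr_equiv E F \<Longrightarrow> modify_cc c D F"
proof (induction rule: modify_cc.induct)
  case (refl D) then show ?case by (rule modify_cc.move[OF _ modify_cc.refl])
next
  case (move D D' c E) then show ?case using modify_cc.move by blast
next
  case (cc D D' c E) then show ?case using modify_cc.cc by blast
qed

lemma modify_gr0: "gr_equiv D E \<Longrightarrow> modify_cc c E F \<Longrightarrow> modify_cc c D F"
  by (rule modify_cc.move)

lemma sigma_block_P: "sigma_block i = P [1..<i]" by (simp add: sigma_block_def P_def)

lemma main_split:
  assumes "i < j"
  shows "VB1 i j = virt_block i @ pw (P [1..<i]) i @ pw (P [1..<i]) (j - i - 1)"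
proof -
  have "j - 1 = i + (j - i - 1)" using assms by simp
  then have "pw (P [1..<i]) (j - 1) = pw (P [1..<i]) i @ pw (P [1..<i]) (j - i - 1)"
    by (metis pw_add)
  then show ?thesis by (simp add: VB1_def pw_def sigma_block_P)
qed

lemma main_split2:
  shows "VB1 i (j - i) = virt_block i @ pw (P [1..<i]) (j - i - 1)"
  by (simp add: VB1_def pw_def sigma_block_P)

theorem lemma3p3:
  fixes i j k :: nat
  assumes "0 < i" and "i < j" and "k < i"
  shows "(num_components (ijk i (j - i) k) = 1 \<longrightarrow> num_components (ijk i j k) = 1)
       \<and> modify_cc (i * (i - 1) div 2) (ijk i j k) (ijk i (j - i) k)"
proof -
  let ?V = "virt_block i" and ?S = "pw (P [1..<i]) i" and ?R = "pw (P [1..<i]) (j - i - 1) @ Bk k"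
  let ?D = "Dl i"
  have n1: "1 \<le> i" using assms by simp
  have wV: "wf_word i ?V" by (auto simp: wf_word_def virt_block_def)
  have wR1: "wf_word i (pw (P [1..<i]) (j - i - 1))" by (rule wf_pw) (auto simp: wf_P)
  have wR2: "wf_word i (Bk k)" using assms by (auto simp: wf_word_def Bk_def)
  have wR: "wf_word i ?R" using wR1 wR2 by simp
  have wD: "\<forall>m\<in>set ?D. 1 \<le> m \<and> m < i" using Dl_set by blast
  have e1: "ijk i j k = (i, ?V @ ?S @ ?R)" using main_split[OF assms(2)] by (simp add: ijk_def)
  have e2: "ijk i (j - i) k = (i, ?V @ ?R)" using main_split2 by (simp add: ijk_def)
  have b1: "beq i (?V @ ?S @ ?R) (?V @ P (?D @ rev ?D) @ ?R)"
    by (rule beq_cong[OF L4 wV wR]) simp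
  have b2: "beq i (?V @ (P ?D @ Q (rev ?D)) @ ?R) (?V @ [] @ ?R)"
    by (rule beq_cong[OF L5[OF wD] wV wR])
  have wmid: "wf_word i ((?V @ P ?D) @ P (rev ?D) @ ?R)" using wV wR wD by (simp add: wf_P)
  have c: "modify_cc (length (rev ?D)) (i, (?V @ P ?D) @ P (rev ?D) @ ?R) (i, (?V @ P ?D) @ Q (rev ?D) @ ?R)"
    by (rule CC[OF wmid n1])
  have len: "length (rev ?D) = i * (i - 1) div 2" using Dl_len[of i] by simp
  have part2: "modify_cc (i * (i - 1) div 2) (ijk i j k) (ijk i (j - i) k)"
  proof -
    have b2': "beq i (?V @ P ?D @ Q (rev ?D) @ ?R) (?V @ ?R)" using b2 by simp
    have c': "modify_cc (i * (i - 1) div 2) (i, ?V @ P (?D @ rev ?D) @ ?R) (i, ?V @ P ?D @ Q (rev ?D) @ ?R)"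
      using c len by simp
    show ?thesis unfolding e1 e2
      by (rule modify_gr0[OF beq_gr[OF n1 b1] modify_gr[OF c' beq_gr[OF n1 b2']]])
  qed
  have p1: "word_perm ?S = word_perm (P (?D @ rev ?D))" using beq_perm[OF L4[of i i]] by simp
  have p2: "word_perm (P (?D @ rev ?D)) = word_perm (P ?D @ Q (rev ?D))"
    by (simp add: fun_eq_iff word_perm_append perm_PQ)
  have p3: "word_perm (P ?D @ Q (rev ?D)) = word_perm []" using beq_perm[OF L5[OF wD]] .
  have pS: "\<And>p. word_perm ?S p = p" using p1 p2 p3 by (simp add: word_perm_def)
  have "word_perm (?V @ ?S @ ?R) = word_perm (?V @ ?R)"
  proof -
    have pS': "\<And>p. word_perm (pw (P [Suc 0..<i]) i) p = p" using pS by simp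
    show ?thesis by (simp add: fun_eq_iff word_perm_append pS')
  qed
  then have "num_components (ijk i j k) = num_components (ijk i (j - i) k)"
    unfolding e1 e2 num_components_def by simp
  then show ?thesis using part2 by simp
qed

end
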